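(* For integers $m\ge1$ and $d\ge0$ define $$e(m,d)=2^{3-2m-d}\sum_{i=1}^{\lfloor (m+1)/2\rfloor} i\binom{2m+d+2}{m+d+2i+1}.$$ Then $e(m,d+1)<\frac{2m+d+3}{2m+2d+4}\,e(m,d)$ for all $d\ge 0$, and for each fixed $m\ge1$, $\lim_{d\to\infty}e(m,d)=0$.
   Context: $\binom{a}{b}=\frac{a!}{b!(a-b)!}$ for integers $0\le b\le a$. *)

theory Defs
  imports Complex_Main
begin

definition e :: "nat \<Rightarrow> nat \<Rightarrow> real" where
  "e m d = (2::real) powr (3 - 2 * real m - real d) *
     (\<Sum>i = 1..(m + 1) div 2. real i * real ((2*m + d + 2) choose (m + d + 2*i + 1)))"

end

theory Submission
  imports Defs
begin

lemma term_lt: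
  assumes "1 \<le> i" "2*i \<le> m+1"
  shows "real (m+d+2) * real ((2*m+(d+1)+2) choose (m+(d+1)+2*i+1))
         < real (2*m+d+3) * real ((2*m+d+2) choose (m+d+2*i+1))"
proof -
  define n where "n = 2*m+d+2"
  define k where "k = m+d+2*i+1"
  have e1: "2*m+(d+1)+2 = Suc n" "m+(d+1)+2*i+1 = Suc k" "2*m+d+3 = Suc n"
    by (simp_all add: n_def k_def)
  have id: "Suc n * (n choose k) = (Suc n choose Suc k) * Suc k"
    by (rule Suc_times_binomial_eq)
  have pos: "0 < Suc n choose Suc k" using assms by (intro zero_less_binomial) (simp add: n_def k_def)
  have "(m+d+2) * (Suc n choose Suc k) < Suc k * (Suc n choose Suc k)"
    using pos assms by (simp add: k_def)
  also have "\<dots> = Suc n * (n choose k)" using id by simp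
  finally have "(m+d+2) * (Suc n choose Suc k) < Suc n * (n choose k)" .
  hence "real ((m+d+2) * (Suc n choose Suc k)) < real (Suc n * (n choose k))"
    by linarith
  thus ?thesis by (simp only: e1 n_def[symmetric] k_def[symmetric] of_nat_mult)
qed

definition S :: "nat \<Rightarrow> nat \<Rightarrow> real" where
  "S m d = (\<Sum>i = 1..(m + 1) div 2. real i * real ((2*m + d + 2) choose (m + d + 2*i + 1)))"

lemma S_lt:
  assumes "m \<ge> 1"
  shows "real (m+d+2) * S m (d+1) < real (2*m+d+3) * S m d"
proof -
  have "(\<Sum>i = 1..(m + 1) div 2. real i * (real (m+d+2) * real ((2*m+(d+1)+2) choose (m+(d+1)+2*i+1))))
     < (\<Sum>i = 1..(m + 1) div 2. real i * (real (2*m+d+3) * real ((2*m+d+2) choose (m+d+2*i+1))))"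
  proof (rule sum_strict_mono)
    show "{1..(m + 1) div 2} \<noteq> {}" using assms by auto
    fix i assume "i \<in> {1..(m + 1) div 2}"
    hence "1 \<le> i" "2*i \<le> m+1" by auto
    thus "real i * (real (m+d+2) * real ((2*m+(d+1)+2) choose (m+(d+1)+2*i+1)))
       < real i * (real (2*m+d+3) * real ((2*m+d+2) choose (m+d+2*i+1)))"
      using term_lt[of i m d] by (intro mult_strict_left_mono) auto
  qed simp
  thus ?thesis unfolding S_def sum_distrib_left by (simp add: algebra_simps)
qed

lemma S_nonneg: "0 \<le> S m d" unfolding S_def by (intro sum_nonneg) auto

lemma e_S: "e m d = 2 powr (3 - 2 * real m - real d) * S m d"
  unfolding e_def S_def by simp

lemma step:
  assumes "m \<ge> 1"
  shows "e m (d + 1) < (real (2*m + d + 3) / real (2*m + 2*d + 4)) * e m d"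
proof -
  define x where "x = 2 powr (2 - 2 * real m - real d)"
  have xp: "x > 0" by (simp add: x_def)
  have ex: "3 - 2*real m - real (d+1) = 2 - 2*real m - real d" by simp
  have a: "e m (d+1) = x * S m (d+1)" unfolding e_S x_def ex ..
  have "2 powr (3 - 2 * real m - real d) = 2 powr (2 - 2 * real m - real d + 1)"
    by (rule arg_cong[where f="\<lambda>t. (2::real) powr t"]) simp
  also have "\<dots> = x * 2" unfolding x_def by (subst powr_add) simp
  finally have b: "e m d = x * 2 * S m d" unfolding e_S by simp
  have c: "real (2*m + 2*d + 4) = 2 * real (m+d+2)" by simp
  have "x * (real (m+d+2) * S m (d+1)) < x * (real (2*m+d+3) * S m d)"
    using S_lt[OF assms, of d] xp by simp
  thus ?thesis unfolding a b c by (simp add: field_simps)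
qed

theorem mainTheorem11:
  fixes m :: nat
  assumes "m \<ge> 1"
  shows "(\<forall>d. e m (d + 1) < (real (2*m + d + 3) / real (2*m + 2*d + 4)) * e m d)
         \<and> (\<lambda>d. e m d) \<longlonglongrightarrow> 0"
proof
  show "\<forall>d. e m (d + 1) < (real (2*m + d + 3) / real (2*m + 2*d + 4)) * e m d"
    using step[OF assms] by blast
  have enn: "0 \<le> e m d" for d unfolding e_S using S_nonneg by simp
  have "summable (e m)"
  proof (rule summable_ratio_test[where c = "3/4" and N = m])
    fix d assume "d \<ge> m"
    have r: "real (2*m + d + 3) / real (2*m + 2*d + 4) \<le> 3/4"
      using \<open>d \<ge> m\<close> by (simp add: divide_simps)
    have "e m (Suc d) \<le> (real (2*m + d + 3) / real (2*m + 2*d + 4)) * e m d"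
      using step[OF assms, of d] by simp
    also have "\<dots> \<le> 3/4 * e m d" using r enn[of d] by (intro mult_right_mono) auto
    finally show "norm (e m (Suc d)) \<le> 3/4 * norm (e m d)"
      using enn[of d] enn[of "Suc d"] by simp
  qed simp
  thus "(\<lambda>d. e m d) \<longlonglongrightarrow> 0" using summable_LIMSEQ_zero by blast
qed

end
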